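(* Let $B=(\tilde U\dot\cup U,E)$ and $B'=(\tilde U\dot\cup U,E')$ be bipartite graphs with $|U|\ge|\tilde U|$ and $\mathrm{nd}_{\tilde U}(B,B')\le s$. If there are positive integers $x,n_1,n_2,n_3$ such that (i) $\deg_{B'}(\tilde u)\ge n_1$ for all $\tilde u\in\tilde U$, (ii) $|N_{B'}(\tilde S)|\ge x|\tilde S|$ for all $\tilde S\subseteq\tilde U$ with $|\tilde S|\le n_2$, (iii) $e_{B'}(\tilde S,S)\le\frac{n_1}{n_3}|\tilde S||S|$ for all $\tilde S\subseteq\tilde U$, $S\subseteq U$ with $xn_2\le|S|<|\tilde S|<n_3$, (iv) $|N_B(S)\cap\tilde S|>s$ for all $\tilde S\subseteq\tilde U$, $S\subseteq U$ with $|\tilde S|\ge n_3$ and $|S|>|U|-|\tilde S|$, then $B'$ has a matching covering $\tilde U$.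
   Context: For bipartite graphs $B,B'$ on the same vertex set $\tilde U\dot\cup U$, $\mathrm{nd}_{\tilde U}(B,B')$ is the number of vertices $\tilde u\in\tilde U$ with $N_B(\tilde u)\ne N_{B'}(\tilde u)$. $N_B(S)$ denotes the set of vertices with a neighbour in $S$, and $e_{B'}(\tilde S,S)$ the number of edges of $B'$ between $\tilde S$ and $S$. *)

theory Defs
  imports Complex_Main
begin

text \<open>A bipartite graph on the vertex set Ut (disjoint union) U is given by its edge set
  E :: ('a * 'b) set with E a subset of Ut x U; the two sides live in different types,
  so the union is automatically disjoint.\<close>

definition bip_graph :: "'a set \<Rightarrow> 'b set \<Rightarrow> ('a \<times> 'b) set \<Rightarrow> bool" where
  "bip_graph Ut U E \<longleftrightarrow> finite Ut \<and> finite U \<and> E \<subseteq> Ut \<times> U"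

definition nbr :: "('a \<times> 'b) set \<Rightarrow> 'a \<Rightarrow> 'b set" where
  "nbr E a = {b. (a, b) \<in> E}"

definition nbrL :: "('a \<times> 'b) set \<Rightarrow> 'a set \<Rightarrow> 'b set" where
  "nbrL E St = {b. \<exists>a\<in>St. (a, b) \<in> E}"

definition nbrR :: "('a \<times> 'b) set \<Rightarrow> 'b set \<Rightarrow> 'a set" where
  "nbrR E S = {a. \<exists>b\<in>S. (a, b) \<in> E}"

definition deg :: "('a \<times> 'b) set \<Rightarrow> 'a \<Rightarrow> nat" where
  "deg E a = card (nbr E a)"

definition nd :: "'a set \<Rightarrow> ('a \<times> 'b) set \<Rightarrow> ('a \<times> 'b) set \<Rightarrow> nat" where
  "nd Ut E E' = card {a \<in> Ut. nbr E a \<noteq> nbr E' a}"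

definition edges_between :: "('a \<times> 'b) set \<Rightarrow> 'a set \<Rightarrow> 'b set \<Rightarrow> nat" where
  "edges_between E St S = card {(a, b) \<in> E. a \<in> St \<and> b \<in> S}"

definition has_matching_covering :: "('a \<times> 'b) set \<Rightarrow> 'a set \<Rightarrow> bool" where
  "has_matching_covering E Ut \<longleftrightarrow>
     (\<exists>M \<subseteq> E. (\<forall>(a, b) \<in> M. \<forall>(a', b') \<in> M. (a, b) \<noteq> (a', b') \<longrightarrow> a \<noteq> a' \<and> b \<noteq> b')
              \<and> Ut \<subseteq> fst ` M)"

end

theory Submission
  imports Defs
begin

lemma hall:
  assumes "finite A" "finite B" "E \<subseteq> A \<times> B" "\<forall>S\<subseteq>A. card S \<le> card (nbrL E S)"
  shows "\<exists>f. inj_on f A \<and> (\<forall>a\<in>A. (a, f a) \<in> E)"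
  using assms
proof (induction "card A" arbitrary: A E rule: less_induct)
  case less
  have finN: "\<And>F T. F \<subseteq> E \<Longrightarrow> finite (nbrL F T)"
  proof -
    fix F T assume "F \<subseteq> E"
    then have "nbrL F T \<subseteq> B" using less.prems(3) by (auto simp: nbrL_def)
    then show "finite (nbrL F T)" using less.prems(2) finite_subset by blast
  qed
  show ?case
  proof (cases "A = {}")
    case True then show ?thesis by auto
  next
    case ne: False
    show ?thesis
    proof (cases "\<exists>S. S \<subseteq> A \<and> S \<noteq> {} \<and> S \<noteq> A \<and> card (nbrL E S) \<le> card S")
      case True
      then obtain S where S: "S \<subseteq> A" "S \<noteq> {}" "S \<noteq> A" "card (nbrL E S) \<le> card S" by blast
      define N where "N = nbrL E S"
      have cardN: "card N = card S" using less.prems(4) S by (simp add: N_def le_antisym)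
      have finS: "finite S" using S(1) less.prems(1) finite_subset by blast
      define E1 where "E1 = {(a,b)\<in>E. a \<in> S}"
      have lt1: "card S < card A" using S less.prems(1) by (meson psubset_card_mono psubsetI)
      have E1sub: "E1 \<subseteq> S \<times> B" using less.prems(3) by (auto simp: E1_def)
      have H1: "\<forall>T\<subseteq>S. card T \<le> card (nbrL E1 T)"
      proof (intro allI impI)
        fix T assume T: "T \<subseteq> S"
        then have "nbrL E1 T = nbrL E T" by (auto simp: nbrL_def E1_def)
        then show "card T \<le> card (nbrL E1 T)" using less.prems(4) T S(1) by auto
      qed
      obtain f1 where f1: "inj_on f1 S" "\<forall>a\<in>S. (a, f1 a) \<in> E1"
        using less.hyps[OF lt1 finS less.prems(2) E1sub H1] by blast
      define E2 where "E2 = {(a,b)\<in>E. a \<in> A - S \<and> b \<notin> N}"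
      have lt2: "card (A - S) < card A"
        using S less.prems(1) ne by (metis Diff_disjoint Diff_subset Int_absorb2 psubsetI psubset_card_mono)
      have E2sub: "E2 \<subseteq> (A - S) \<times> B" using less.prems(3) by (auto simp: E2_def)
      have H2: "\<forall>T\<subseteq>A - S. card T \<le> card (nbrL E2 T)"
      proof (intro allI impI)
        fix T assume T: "T \<subseteq> A - S"
        have finT: "finite T" using T less.prems(1) finite_subset by blast
        have sub: "nbrL E (T \<union> S) \<subseteq> nbrL E2 T \<union> N" using T by (auto simp: nbrL_def E2_def N_def)
        have cu: "card (T \<union> S) = card T + card S"
          using T finT finS by (subst card_Un_disjoint) auto
        have "card T + card S \<le> card (nbrL E (T \<union> S))" using less.prems(4) T S(1)
          by (metis Diff_subset Un_subset_iff cu order.trans)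
        also have "\<dots> \<le> card (nbrL E2 T \<union> N)"
          using sub finN[of E2 T] finN[of E S] by (intro card_mono) (auto simp: E2_def N_def)
        also have "\<dots> \<le> card (nbrL E2 T) + card N" by (rule card_Un_le)
        finally show "card T \<le> card (nbrL E2 T)" using cardN by linarith
      qed
      have finAS: "finite (A - S)" using less.prems(1) by blast
      obtain f2 where f2: "inj_on f2 (A - S)" "\<forall>a\<in>A - S. (a, f2 a) \<in> E2"
        using less.hyps[OF lt2 finAS less.prems(2) E2sub H2] by blast
      define f where "f a = (if a \<in> S then f1 a else f2 a)" for a
      have inN: "\<forall>a\<in>S. f1 a \<in> N" using f1(2) by (auto simp: E1_def N_def nbrL_def)
      have notN: "\<forall>a\<in>A - S. f2 a \<notin> N" using f2(2) by (auto simp: E2_def)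
      have "inj_on f A"
        unfolding inj_on_def f_def
        using f1(1) f2(1) inN notN unfolding inj_on_def by (metis DiffI)
      moreover have "\<forall>a\<in>A. (a, f a) \<in> E"
        using f1(2) f2(2) by (auto simp: f_def E1_def E2_def)
      ultimately show ?thesis by blast
    next
      case False
      hence strict: "\<And>S. S \<subseteq> A \<Longrightarrow> S \<noteq> {} \<Longrightarrow> S \<noteq> A \<Longrightarrow> card S < card (nbrL E S)"
        by (meson not_le)
      obtain a where a: "a \<in> A" using ne by blast
      have "card {a} \<le> card (nbrL E {a})" using less.prems(4) a by auto
      then have "nbrL E {a} \<noteq> {}" by auto
      then obtain b where b: "(a, b) \<in> E" by (auto simp: nbrL_def)
      define E' where "E' = {(a',b')\<in>E. a' \<in> A - {a} \<and> b' \<noteq> b}"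
      have lt: "card (A - {a}) < card A" using a less.prems(1) by (meson card_Diff1_less)
      have E'sub: "E' \<subseteq> (A - {a}) \<times> B" using less.prems(3) by (auto simp: E'_def)
      have H: "\<forall>T\<subseteq>A - {a}. card T \<le> card (nbrL E' T)"
      proof (intro allI impI)
        fix T assume T: "T \<subseteq> A - {a}"
        show "card T \<le> card (nbrL E' T)"
        proof (cases "T = {}")
          case True then show ?thesis by simp
        next
          case False
          have "T \<noteq> A" using T a by auto
          then have c: "card T < card (nbrL E T)" using strict[of T] T False by auto
          have "nbrL E T \<subseteq> insert b (nbrL E' T)" using T by (auto simp: nbrL_def E'_def)
          then have "card (nbrL E T) \<le> card (insert b (nbrL E' T))"
            using finN[of E' T] by (intro card_mono) (auto simp: E'_def)
          also have "\<dots> \<le> card (nbrL E' T) + 1"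
            using finN[of E' T] E'_def card_insert_le_m1 by (simp add: card_insert_if subset_iff)
          finally show ?thesis using c by linarith
        qed
      qed
      have finA': "finite (A - {a})" using less.prems(1) by blast
      obtain g where g: "inj_on g (A - {a})" "\<forall>a'\<in>A - {a}. (a', g a') \<in> E'"
        using less.hyps[OF lt finA' less.prems(2) E'sub H] by blast
      have gb: "\<forall>a'\<in>A - {a}. g a' \<noteq> b" using g(2) by (auto simp: E'_def)
      have "inj_on (g(a := b)) A"
        using g(1) gb unfolding inj_on_def by (metis DiffI fun_upd_apply singletonD)
      moreover have "\<forall>a'\<in>A. (a', (g(a := b)) a') \<in> E"
        using g(2) b by (auto simp: E'_def)
      ultimately show ?thesis by blast
    qed
  qed
qed

theorem lemma11p8:
  fixes Ut :: "'a set" and U :: "'b set" and E E' :: "('a \<times> 'b) set"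
    and s x n1 n2 n3 :: nat
  assumes B: "bip_graph Ut U E" and B': "bip_graph Ut U E'"
    and sizes: "card U \<ge> card Ut"
    and nd: "nd Ut E E' \<le> s"
    and pos: "x > 0" "n1 > 0" "n2 > 0" "n3 > 0"
    and i: "\<forall>a \<in> Ut. deg E' a \<ge> n1"
    and ii: "\<forall>St \<subseteq> Ut. card St \<le> n2 \<longrightarrow> card (nbrL E' St) \<ge> x * card St"
    and iii: "\<forall>St \<subseteq> Ut. \<forall>S \<subseteq> U. x * n2 \<le> card S \<and> card S < card St \<and> card St < n3 \<longrightarrow>
                real (edges_between E' St S) \<le> real n1 / real n3 * real (card St) * real (card S)"
    and iv: "\<forall>St \<subseteq> Ut. \<forall>S \<subseteq> U. card St \<ge> n3 \<and> int (card S) > int (card U) - int (card St) \<longrightarrow>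
                card (nbrR E S \<inter> St) > s"
  shows "has_matching_covering E' Ut"
proof -
  have finUt: "finite Ut" and finU: "finite U" and E'sub: "E' \<subseteq> Ut \<times> U"
    using B' by (auto simp: bip_graph_def)
  have Esub: "E \<subseteq> Ut \<times> U" using B by (auto simp: bip_graph_def)
  have hallc: "\<forall>St\<subseteq>Ut. card St \<le> card (nbrL E' St)"
  proof (intro allI impI)
    fix St assume St: "St \<subseteq> Ut"
    define N where "N = nbrL E' St"
    have NU: "N \<subseteq> U" using E'sub by (auto simp: N_def nbrL_def)
    have finN: "finite N" using NU finU finite_subset by blast
    have finSt: "finite St" using St finUt finite_subset by blast
    show "card St \<le> card (nbrL E' St)"
    proof (rule ccontr)
      assume "\<not> ?thesis"
      then have lt: "card N < card St" by (simp add: N_def)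
      consider "card St \<le> n2" | "n2 < card St" "card St < n3" | "n3 \<le> card St" by linarith
      then show False
      proof cases
        case 1
        then have "x * card St \<le> card N" using ii St by (simp add: N_def)
        moreover have "card St \<le> x * card St" using pos(1) by simp
        ultimately show False using lt by linarith
      next
        case 2
        show False
        proof (cases "x * n2 \<le> card N")
          case False
          obtain St' where St': "St' \<subseteq> St" "card St' = n2"
            using 2 finSt by (meson less_imp_le obtain_subset_with_card_n)
          have "x * n2 \<le> card (nbrL E' St')" using ii St St' by (metis order.trans order_refl)
          moreover have "nbrL E' St' \<subseteq> N" using St' by (auto simp: N_def nbrL_def)
          then have "card (nbrL E' St') \<le> card N" using finN card_mono by blast
          ultimately show False using False by linarith
        next
          case True
          have up: "real (edges_between E' St N) \<le> real n1 / real n3 * real (card St) * real (card N)"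
            using iii St NU True lt 2 by blast
          have eq: "{(a, b) \<in> E'. a \<in> St \<and> b \<in> N} = Sigma St (nbr E')"
            by (auto simp: N_def nbrL_def nbr_def)
          have finnbr: "\<And>a. finite (nbr E' a)"
          proof -
            fix a have "nbr E' a \<subseteq> U" using E'sub by (auto simp: nbr_def)
            then show "finite (nbr E' a)" using finU finite_subset by blast
          qed
          have "edges_between E' St N = (\<Sum>a\<in>St. card (nbr E' a))"
            unfolding edges_between_def eq using finSt finnbr by (simp add: card_SigmaI)
          also have "\<dots> \<ge> (\<Sum>a\<in>St. n1)" using i St by (intro sum_mono) (auto simp: deg_def)
          finally have "n1 * card St \<le> edges_between E' St N" by (simp add: mult.commute)
          then have ge: "real n1 * real (card St) \<le> real (edges_between E' St N)"
            by (metis of_nat_le_iff of_nat_mult)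
          have cN: "real (card N) < real n3" using lt 2 by simp
          have cS: "real (card St) > 0" using 2 by simp
          have "real n1 / real n3 * real (card St) * real (card N)
                 = real n1 * real (card St) * (real (card N) / real n3)" by simp
          also have "\<dots> < real n1 * real (card St) * 1"
            using cN cS pos(2) pos(4) by (intro mult_strict_left_mono) auto
          finally have "real n1 / real n3 * real (card St) * real (card N) < real n1 * real (card St)"
            by simp
          then show False using up ge by linarith
        qed
      next
        case 3
        define S where "S = U - N"
        have cS: "card S = card U - card N" using NU finN by (simp add: S_def card_Diff_subset)
        have "card N \<le> card U" using NU finU card_mono by blast
        then have "int (card S) > int (card U) - int (card St)" using cS lt by simp
        then have gt: "card (nbrR E S \<inter> St) > s" using iv St 3 by (auto simp: S_def)
        have "nbrR E S \<inter> St \<subseteq> {a \<in> Ut. nbr E a \<noteq> nbr E' a}"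
        proof
          fix a assume a: "a \<in> nbrR E S \<inter> St"
          then obtain b where b: "b \<in> S" "(a, b) \<in> E" by (auto simp: nbrR_def)
          have "(a, b) \<notin> E'" using b(1) a by (auto simp: S_def N_def nbrL_def)
          then have "nbr E a \<noteq> nbr E' a" using b(2) by (auto simp: nbr_def)
          then show "a \<in> {a \<in> Ut. nbr E a \<noteq> nbr E' a}" using a St by auto
        qed
        then have "card (nbrR E S \<inter> St) \<le> nd Ut E E'"
          unfolding nd_def using finUt by (intro card_mono) auto
        then show False using gt nd by linarith
      qed
    qed
  qed
  obtain f where f: "inj_on f Ut" "\<forall>a\<in>Ut. (a, f a) \<in> E'"
    using hall[OF finUt finU E'sub hallc] by blast
  define M where "M = (\<lambda>a. (a, f a)) ` Ut"
  have "M \<subseteq> E'" using f(2) by (auto simp: M_def)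
  moreover have "\<forall>(a, b) \<in> M. \<forall>(a', b') \<in> M. (a, b) \<noteq> (a', b') \<longrightarrow> a \<noteq> a' \<and> b \<noteq> b'"
    using f(1) unfolding M_def inj_on_def by auto
  moreover have "Ut \<subseteq> fst ` M" by (force simp: M_def)
  ultimately show ?thesis unfolding has_matching_covering_def by blast
qed

end
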